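(* Let $0<q<1$ and let $X$ be a random variable such that $A(a)=\mathbb{E}\exp_q(aX)$ is finite for all $a>0$. Then $\theta(a)=\dfrac{a}{A(a)^{1-q}}$ is an increasing function of $a$ on $(0,\infty)$.
   Context: For $q\in(0,2)$, $q\ne1$, the $q$-deformed exponential is $\exp_q(u)=[1+(1-q)u]_+^{1/(1-q)}$ for real $u$, where $[u]_+=\max(u,0)$. *)

theory Defs
  imports "HOL-Probability.Probability"
begin

definition expq :: "real \<Rightarrow> real \<Rightarrow> real" where
  "expq q u = (max (1 + (1 - q) * u) 0) powr (1 / (1 - q))"

end

theory Submission
  imports Defs
begin

lemma expq_scale:
  assumes "a > 0" "q < 1"
  shows "expq q (a * x) = a powr (1/(1-q)) * max (1/a + (1-q)*x) 0 powr (1/(1-q))"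
proof -
  have "max (1 + (1 - q) * (a*x)) 0 = a * max (1/a + (1-q)*x) 0"
    using assms by (simp add: max_def field_simps)
  then show ?thesis unfolding expq_def using assms by (simp add: powr_mult)
qed

lemma pt_le:
  assumes "0 < a" "a < b" "q < 1"
  shows "expq q (b * x) / b powr (1/(1-q)) \<le> expq q (a * x) / a powr (1/(1-q))"
    and "expq q (a * x) > 0 \<Longrightarrow> expq q (b * x) / b powr (1/(1-q)) < expq q (a * x) / a powr (1/(1-q))"
proof -
  have ab: "1/b < 1/a" using assms by (simp add: frac_less2)
  have p: "1/(1-q) > 0" using assms by simp
  have ea: "expq q (a * x) / a powr (1/(1-q)) = max (1/a + (1-q)*x) 0 powr (1/(1-q))"
    using expq_scale[of a q x] assms by simp
  have eb: "expq q (b * x) / b powr (1/(1-q)) = max (1/b + (1-q)*x) 0 powr (1/(1-q))"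
    using expq_scale[of b q x] assms by simp
  show "expq q (b * x) / b powr (1/(1-q)) \<le> expq q (a * x) / a powr (1/(1-q))"
    unfolding ea eb using ab p by (intro powr_mono2) auto
  assume "expq q (a * x) > 0"
  then have "max (1/a + (1-q)*x) 0 powr (1/(1-q)) > 0" using ea assms
  proof -
    have "0 < expq q (a * x) / a powr (1/(1-q))" using \<open>expq q (a * x) > 0\<close> assms by simp
    then show ?thesis using ea by simp
  qed
  then have u: "1/a + (1-q)*x > 0" by (cases "1/a + (1-q)*x > 0") auto
  show "expq q (b * x) / b powr (1/(1-q)) < expq q (a * x) / a powr (1/(1-q))"
    unfolding ea eb using ab p u by (intro powr_less_mono2) auto
qed

theorem lemma2:
  fixes M :: "'a measure" and X :: "'a \<Rightarrow> real" and q :: real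
  assumes "prob_space M"
    and "X \<in> borel_measurable M"
    and "0 < q" and "q < 1"
    and "\<And>a. a > 0 \<Longrightarrow> integrable M (\<lambda>\<omega>. expq q (a * X \<omega>))"
  shows "strict_mono_on {a::real. a > 0 \<and> (\<integral>\<omega>. expq q (a * X \<omega>) \<partial>M) > 0}
           (\<lambda>a. a / (\<integral>\<omega>. expq q (a * X \<omega>) \<partial>M) powr (1 - q))"
proof (rule strict_mono_onI)
  fix a b assume A: "a \<in> {a::real. a > 0 \<and> (\<integral>\<omega>. expq q (a * X \<omega>) \<partial>M) > 0}"
    and B: "b \<in> {a::real. a > 0 \<and> (\<integral>\<omega>. expq q (a * X \<omega>) \<partial>M) > 0}" and ab: "a < b"
  define p where "p = 1/(1-q)"
  have p: "p > 0" using assms p_def by simp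
  define F where "F c \<omega> = expq q (c * X \<omega>) / c powr p" for c \<omega>
  define I where "I c = (\<integral>\<omega>. F c \<omega> \<partial>M)" for c
  have a0: "a > 0" and b0: "b > 0" using A B by auto
  have Fint: "integrable M (F c)" if "c > 0" for c
    unfolding F_def using assms(5)[OF that] by simp
  have Aeq: "(\<integral>\<omega>. expq q (c * X \<omega>) \<partial>M) = c powr p * I c" if "c > 0" for c
    unfolding I_def F_def using that by simp
  have Ia: "I a > 0" using A Aeq[OF a0] a0 by (simp add: zero_less_mult_iff)
  have Ib: "I b > 0" using B Aeq[OF b0] b0 by (simp add: zero_less_mult_iff)
  have le: "\<And>\<omega>. F b \<omega> \<le> F a \<omega>" unfolding F_def p_def using pt_le(1)[OF a0 ab assms(4)] by simp
  have lt: "\<And>\<omega>. expq q (a * X \<omega>) > 0 \<Longrightarrow> F b \<omega> < F a \<omega>"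
    unfolding F_def p_def using pt_le(2)[OF a0 ab assms(4)] by simp
  have "I b < I a"
  proof (rule ccontr)
    assume "\<not> I b < I a"
    moreover have "I b \<le> I a" unfolding I_def using Fint a0 b0 le by (intro integral_mono) auto
    ultimately have eq: "(\<integral>\<omega>. (F a \<omega> - F b \<omega>) \<partial>M) = 0"
      unfolding I_def using Fint a0 b0 by (subst Bochner_Integration.integral_diff) auto
    have "AE \<omega> in M. F a \<omega> - F b \<omega> = 0"
      using integral_nonneg_eq_0_iff_AE[of M "\<lambda>\<omega>. F a \<omega> - F b \<omega>"] eq Fint a0 b0 le
      by (simp add: Bochner_Integration.integrable_diff)
    then have "AE \<omega> in M. expq q (a * X \<omega>) = 0"
    proof (rule AE_mp, intro AE_I2 impI)
      fix \<omega> assume "F a \<omega> - F b \<omega> = 0"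
      moreover have "expq q (a * X \<omega>) \<ge> 0" unfolding expq_def by simp
      ultimately show "expq q (a * X \<omega>) = 0" using lt[of \<omega>] by fastforce
    qed
    then have "(\<integral>\<omega>. expq q (a * X \<omega>) \<partial>M) = 0" by (simp add: integral_eq_zero_AE)
    then show False using A by simp
  qed
  have th: "c / (\<integral>\<omega>. expq q (c * X \<omega>) \<partial>M) powr (1 - q) = 1 / I c powr (1-q)"
    if "c > 0" "I c > 0" for c
  proof -
    have "(c powr p * I c) powr (1-q) = c * I c powr (1-q)"
      using that p assms(4) by (simp add: powr_mult powr_powr p_def)
    then show ?thesis using Aeq[OF that(1)] that by simp
  qed
  show "a / (\<integral>\<omega>. expq q (a * X \<omega>) \<partial>M) powr (1 - q) < b / (\<integral>\<omega>. expq q (b * X \<omega>) \<partial>M) powr (1 - q)"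
    unfolding th[OF a0 Ia] th[OF b0 Ib]
    using \<open>I b < I a\<close> Ib assms(4)
    by (intro divide_strict_left_mono powr_less_mono2) (auto simp: mult_pos_pos)
qed

end
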